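(* Let $p\ge 2$, let $s\in\mathbb{R}^n$ be nonzero and let $\mathcal{R}\in\mathbb{R}^{\otimes^{p-1} n}_{\mathrm{sym}}$. Then the problem of minimizing $\|\mathcal{U}\|_F$ over $\mathcal{U}\in\mathbb{R}^{\otimes^p n}_{\mathrm{sym}}$ subject to $\mathcal{U}[s]=\mathcal{R}$ has a unique solution, and this solution is the unique $\mathcal{U}\in\mathbb{R}^{\otimes^p n}_{\mathrm{sym}}$ satisfying both $\mathcal{U}[s]=\mathcal{R}$ and $\mathcal{U}[u_1,\dots,u_p]=0$ whenever all of $u_1,\dots,u_p\in\mathbb{R}^n$ are orthogonal to $s$.
   Context: A $p$-tensor $\mathcal{T} \in \mathbb{R}^{\otimes^p n}$ is a multilinear map $(\mathbb{R}^n)^p \to \mathbb{R}$; $\mathcal{T}[s]$ denotes the $(p-1)$-tensor obtained by fixing the first argument to $s$. $\mathcal{T}$ is symmetric if it is invariant under all permutations of its arguments; $\mathbb{R}^{\otimes^p n}_{\mathrm{sym}}$ is the space of symmetric $p$-tensors. $\|\cdot\|_F$ is the Frobenius norm of the array of entries $\mathcal{T}[e_{i_1},\dots,e_{i_p}]$. *)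

theory Defs
  imports "HOL-Analysis.Analysis"
begin

text \<open>Tensors over R^n, with n = CARD('n) given by a finite index type.
A p-tensor is represented by its array of entries, a function on index lists
of length p (entries T[e_i1,...,e_ip]); it is required to vanish on index
lists of any other length so that tensors are determined by their entries.\<close>

type_synonym 'n tensor = "'n list \<Rightarrow> real"

definition idx :: "nat \<Rightarrow> 'n list set" where
  "idx p = {xs. length xs = p}"

definition is_tensor :: "nat \<Rightarrow> 'n tensor \<Rightarrow> bool" where
  "is_tensor p T \<longleftrightarrow> (\<forall>xs. length xs \<noteq> p \<longrightarrow> T xs = 0)"

definition sym_tensor :: "nat \<Rightarrow> 'n tensor \<Rightarrow> bool" where
  "sym_tensor p T \<longleftrightarrow> is_tensor p T \<and>
     (\<forall>xs ys. length xs = p \<longrightarrow> mset xs = mset ys \<longrightarrow> T xs = T ys)"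

definition tensor_eval :: "nat \<Rightarrow> ('n::finite) tensor \<Rightarrow> (nat \<Rightarrow> real^'n) \<Rightarrow> real" where
  "tensor_eval p T u = (\<Sum>xs\<in>idx p. T xs * (\<Prod>k<p. u k $ (xs ! k)))"

definition tensor_apply :: "nat \<Rightarrow> ('n::finite) tensor \<Rightarrow> real^'n \<Rightarrow> 'n tensor" where
  "tensor_apply p T s = (\<lambda>xs. if length xs = p - 1 then (\<Sum>i\<in>UNIV. s $ i * T (i # xs)) else 0)"

definition frob_norm :: "nat \<Rightarrow> ('n::finite) tensor \<Rightarrow> real" where
  "frob_norm p T = sqrt (\<Sum>xs\<in>idx p. (T xs)\<^sup>2)"

end

theory Submission imports Defs begin

lemma finite_idx: "finite (idx p :: ('n::finite) list set)"
proof -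
  have "idx p = {xs::'n list. set xs \<subseteq> UNIV \<and> length xs = p}" by (auto simp: idx_def)
  thus ?thesis using finite_lists_length_eq[of "UNIV::'n set" p] by simp
qed

lemma sum_idx_Suc:
  "(\<Sum>xs\<in>idx (Suc m). F xs) = (\<Sum>a\<in>UNIV. \<Sum>ys\<in>idx m. F (a # ys))"
proof -
  have e: "idx (Suc m) = (\<lambda>(a,ys). a#ys) ` (UNIV \<times> idx m)"
    by (auto simp: idx_def length_Suc_conv image_iff)
  have i: "inj_on (\<lambda>(a,ys). a#ys) (UNIV \<times> idx m)" by (auto simp: inj_on_def)
  show ?thesis unfolding e sum.reindex[OF i] sum.cartesian_product by (simp add: case_prod_beta)
qed

lemma prod_sum_idx:
  fixes f :: "nat \<Rightarrow> 'n::finite \<Rightarrow> real"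
  shows "(\<Sum>xs\<in>idx p. \<Prod>k<p. f k (xs ! k)) = (\<Prod>k<p. \<Sum>a\<in>(UNIV::('n::finite) set). f k a)"
proof (induction p arbitrary: f)
  case 0
  have "idx 0 = {[]::'n list}" by (auto simp: idx_def)
  thus ?case by simp
next
  case (Suc p)
  have "(\<Sum>xs\<in>idx (Suc p). \<Prod>k<Suc p. f k (xs ! k))
     = (\<Sum>a\<in>(UNIV::'n set). \<Sum>ys\<in>idx p. f 0 a * (\<Prod>k<p. f (Suc k) (ys ! k)))"
    unfolding sum_idx_Suc prod.lessThan_Suc_shift by simp
  also have "\<dots> = (\<Sum>a\<in>(UNIV::'n set). f 0 a * (\<Prod>k<p. \<Sum>b\<in>(UNIV::'n set). f (Suc k) b))"
    by (subst Suc.IH[of "\<lambda>k. f (Suc k)", symmetric]) (intro sum.cong refl, rule sum_distrib_left[symmetric])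
  also have "\<dots> = (\<Prod>k<Suc p. \<Sum>a\<in>(UNIV::'n set). f k a)"
    unfolding prod.lessThan_Suc_shift by (simp add: sum_distrib_right)
  finally show ?case .
qed

lemma tensor_eval_cong:
  "(\<And>k. k < p \<Longrightarrow> u k = v k) \<Longrightarrow> tensor_eval p T u = tensor_eval p T v"
  unfolding tensor_eval_def by (intro sum.cong refl arg_cong2[where f="(*)"] prod.cong) auto

lemma tensor_eval_Suc:
  "tensor_eval (Suc m) T u = tensor_eval m (tensor_apply (Suc m) T (u 0)) (u \<circ> Suc)"
proof -
  have "tensor_eval (Suc m) T u = (\<Sum>a\<in>UNIV. \<Sum>ys\<in>idx m. T (a#ys) * (u 0 $ a * (\<Prod>k<m. u (Suc k) $ (ys ! k))))"
    unfolding tensor_eval_def sum_idx_Suc prod.lessThan_Suc_shift by simp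
  also have "\<dots> = (\<Sum>ys\<in>idx m. \<Sum>a\<in>UNIV. u 0 $ a * T (a#ys) * (\<Prod>k<m. u (Suc k) $ (ys ! k)))"
    by (subst sum.swap) (simp add: algebra_simps)
  also have "\<dots> = tensor_eval m (tensor_apply (Suc m) T (u 0)) (u \<circ> Suc)"
    unfolding tensor_eval_def tensor_apply_def
    by (intro sum.cong refl) (auto simp: idx_def sum_distrib_right)
  finally show ?thesis .
qed

lemma tensor_entry:
  assumes "length xs = p"
  shows "tensor_eval p T (\<lambda>k. axis (xs ! k) 1) = T xs"
proof -
  have "(\<Prod>k<p. axis (xs ! k) 1 $ (ys ! k)) = (if ys = xs then 1 else (0::real))" if "ys \<in> idx p" for ys
  proof (cases "ys = xs")
    case True thus ?thesis by (simp add: axis_def)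
  next
    case False
    have "length ys = p" using that by (simp add: idx_def)
    then obtain k where "k < p" "ys ! k \<noteq> xs ! k" using False assms
      by (metis list_eq_iff_nth_eq)
    thus ?thesis using False by (auto simp: axis_def intro!: prod_zero bexI[of _ k])
  qed
  hence "tensor_eval p T (\<lambda>k. axis (xs ! k) 1) = (\<Sum>ys\<in>idx p. if ys = xs then T ys else 0)"
    unfolding tensor_eval_def by (intro sum.cong) auto
  also have "\<dots> = T xs" using finite_idx[of p] assms by (subst sum.delta) (auto simp: idx_def)
  finally show ?thesis .
qed

lemma te_upd:
  assumes "k < p"
  shows "tensor_eval p T (u(k:=v)) = (\<Sum>xs\<in>idx p. T xs * (v $ (xs!k) * (\<Prod>j\<in>{..<p}-{k}. u j $ (xs!j))))"
  unfolding tensor_eval_def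
proof (intro sum.cong refl arg_cong2[where f="(*)"])
  fix xs :: "'a list"
  have "(\<Prod>j<p. (u(k := v)) j $ (xs ! j)) = (u(k := v)) k $ (xs ! k) * (\<Prod>j\<in>{..<p}-{k}. (u(k := v)) j $ (xs ! j))"
    using assms by (intro prod.remove) auto
  also have "\<dots> = v $ (xs!k) * (\<Prod>j\<in>{..<p}-{k}. u j $ (xs!j))"
  proof -
    have "(\<Prod>j\<in>{..<p}-{k}. (u(k:=v)) j $ (xs!j)) = (\<Prod>j\<in>{..<p}-{k}. u j $ (xs!j))"
      by (intro prod.cong) auto
    thus ?thesis by simp
  qed
  finally show "(\<Prod>j<p. (u(k := v)) j $ (xs ! j)) = v $ (xs!k) * (\<Prod>j\<in>{..<p}-{k}. u j $ (xs!j))" .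
qed

lemma te_lin:
  assumes "k < p"
  shows "tensor_eval p T (u(k := x + c *\<^sub>R y)) = tensor_eval p T (u(k:=x)) + c * tensor_eval p T (u(k:=y))"
  unfolding te_upd[OF assms] by (simp add: sum.distrib sum_distrib_left algebra_simps)

lemma te_perm:
  fixes T :: "('n::finite) tensor"
  assumes "sym_tensor p T" "\<sigma> permutes {..<p}"
  shows "tensor_eval p T (u \<circ> \<sigma>) = tensor_eval p T u"
proof -
  have "tensor_eval p T (u \<circ> \<sigma>) = (\<Sum>ys\<in>idx p. T ys * (\<Prod>k<p. u k $ (ys ! k)))"
    unfolding tensor_eval_def
  proof (rule sum.reindex_bij_witness[of _ "permute_list \<sigma>" "permute_list (inv \<sigma>)"])
    fix a :: "'n list" assume a: "a \<in> idx p"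
    hence l: "length a = p" by (simp add: idx_def)
    have pi: "inv \<sigma> permutes {..<length a}" using permutes_inv[OF assms(2)] l by simp
    have ps: "\<sigma> permutes {..<length a}" using assms(2) l by simp
    show "permute_list \<sigma> (permute_list (inv \<sigma>) a) = a"
      using permute_list_compose[OF ps, of "inv \<sigma>"] permutes_inv_o(2)[OF assms(2)] by simp
    show "permute_list (inv \<sigma>) a \<in> idx p" using l by (simp add: idx_def)
    show "permute_list (inv \<sigma>) (permute_list \<sigma> a) = a"
      using permute_list_compose[OF pi, of "\<sigma>"] permutes_inv_o(1)[OF assms(2)] by simp
    show "permute_list \<sigma> a \<in> idx p" using l by (simp add: idx_def)
    have "T (permute_list (inv \<sigma>) a) = T a"
      using assms(1) l mset_permute_list[OF pi] unfolding sym_tensor_def by (metis length_permute_list)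
    moreover have "(\<Prod>k<p. u k $ (permute_list (inv \<sigma>) a ! k)) = (\<Prod>k<p. (u \<circ> \<sigma>) k $ (a ! k))"
    proof -
      have "(\<Prod>k<p. u k $ (permute_list (inv \<sigma>) a ! k)) = (\<Prod>k<p. u k $ (a ! inv \<sigma> k))"
        using pi l by (intro prod.cong refl) (simp add: permute_list_nth)
      also have "\<dots> = (\<Prod>k<p. ((\<lambda>k. u k $ (a ! inv \<sigma> k)) \<circ> \<sigma>) k)"
        by (rule prod.permute[OF assms(2)])
      also have "\<dots> = (\<Prod>k<p. (u \<circ> \<sigma>) k $ (a ! k))"
        using permutes_inverses(2)[OF assms(2)] by simp
      finally show ?thesis .
    qed
    ultimately show "T (permute_list (inv \<sigma>) a) * (\<Prod>k<p. u k $ (permute_list (inv \<sigma>) a ! k)) = T a * (\<Prod>k<p. (u \<circ> \<sigma>) k $ (a ! k))"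
      by simp
  qed
  thus ?thesis by (simp add: tensor_eval_def)
qed

lemma te_zero_s:
  assumes "sym_tensor p T" "tensor_apply p T s = (\<lambda>_. 0)" "k < p" "v k = s"
  shows "tensor_eval p T v = 0"
proof -
  obtain m where m: "p = Suc m" using assms(3) by (cases p) auto
  have "Transposition.transpose 0 k permutes {..<p}" using assms(3) by (intro permutes_swap_id) auto
  hence "tensor_eval p T v = tensor_eval p T (v \<circ> Transposition.transpose 0 k)" using te_perm assms(1) by metis
  also have "\<dots> = 0" unfolding m tensor_eval_Suc using assms(2,4) m
    by (simp add: tensor_eval_def)
  finally show ?thesis .
qed

definition Pv :: "real^'n \<Rightarrow> real^'n \<Rightarrow> real^'n" where
  "Pv s x = x - ((s \<bullet> x) / (s \<bullet> s)) *\<^sub>R s"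

definition tcomp :: "nat \<Rightarrow> real^'n \<Rightarrow> ('n::finite) tensor \<Rightarrow> 'n tensor" where
  "tcomp p s T xs = (if length xs = p then tensor_eval p T (\<lambda>k. Pv s (axis (xs!k) 1)) else 0)"

lemma Pv_orth: "s \<noteq> 0 \<Longrightarrow> s \<bullet> Pv s x = 0"
  by (simp add: Pv_def inner_diff_right)

lemma Pv_id: "s \<bullet> x = 0 \<Longrightarrow> Pv s x = x"
  by (simp add: Pv_def)

lemma Pv_dec: "x = Pv s x + ((s \<bullet> x) / (s \<bullet> s)) *\<^sub>R s"
  by (simp add: Pv_def)

lemma inner_axis1: "s \<bullet> axis a 1 = (s $ a :: real)"
  by (simp add: cart_eq_inner_axis)

lemma Pv_axis: "Pv s (axis a 1) $ b = (if b = a then 1 else 0) - s$a * s$b / (s \<bullet> s)"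
proof -
  have "Pv s (axis a 1) $ b = axis a 1 $ b - s$a / (s \<bullet> s) * s$b"
    by (simp add: Pv_def inner_axis1)
  thus ?thesis by (simp add: axis_def)
qed

lemma Pv_axis_sym: "Pv s (axis a 1) $ b = Pv s (axis b 1) $ a"
  by (simp add: Pv_axis)

lemma Pv_sum: "(\<Sum>a\<in>UNIV. c$a * Pv s (axis a 1) $ b) = Pv s c $ b"
proof -
  have "(\<Sum>a\<in>UNIV. c$a * Pv s (axis a 1) $ b) = (\<Sum>a\<in>UNIV. (if a = b then c$a else 0) - c$a * s$a * s$b / (s \<bullet> s))"
    by (intro sum.cong refl) (simp add: Pv_axis right_diff_distrib)
  also have "\<dots> = c$b - (\<Sum>a\<in>UNIV. c$a * s$a) * s$b / (s \<bullet> s)"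
    by (simp add: sum_subtractf sum_divide_distrib sum_distrib_right)
  also have "\<dots> = Pv s c $ b"
    by (simp add: Pv_def inner_vec_def mult.commute)
  finally show ?thesis .
qed

lemma Pv_sum': "(\<Sum>a\<in>UNIV. Pv s (axis a 1) $ b * c$a) = Pv s c $ b"
  using Pv_sum[of c s b] by (simp add: mult.commute)

lemma te_proj:
  assumes "sym_tensor p D" "tensor_apply p D s = (\<lambda>_. 0)"
  shows "tensor_eval p D (\<lambda>k. Pv s (u k)) = tensor_eval p D u"
proof -
  define w where "w m = (\<lambda>j. if j < m then Pv s (u j) else u j)" for m
  have "m \<le> p \<Longrightarrow> tensor_eval p D (w m) = tensor_eval p D u" for m
  proof (induction m)
    case 0 thus ?case by (simp add: w_def)
  next
    case (Suc m)
    hence mp: "m < p" by simp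
    have e1: "w (Suc m) = (w m)(m := Pv s (u m))" by (auto simp: w_def)
    have e2: "w m = (w m)(m := Pv s (u m) + ((s \<bullet> u m) / (s \<bullet> s)) *\<^sub>R s)"
      using Pv_dec[of "u m" s] by (auto simp: w_def)
    have "tensor_eval p D (w m) = tensor_eval p D (w (Suc m)) + ((s \<bullet> u m) / (s \<bullet> s)) * tensor_eval p D ((w m)(m := s))"
      by (subst e2) (simp add: te_lin[OF mp] e1)
    also have "tensor_eval p D ((w m)(m := s)) = 0"
      by (rule te_zero_s[OF assms mp]) simp
    finally show ?case using Suc by simp
  qed
  hence "tensor_eval p D (w p) = tensor_eval p D u" by simp
  moreover have "tensor_eval p D (w p) = tensor_eval p D (\<lambda>k. Pv s (u k))"
    by (rule tensor_eval_cong) (simp add: w_def)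
  ultimately show ?thesis by simp
qed

lemma te_tcomp: "tensor_eval p (tcomp p s T) u = tensor_eval p T (\<lambda>k. Pv s (u k))"
proof -
  have "tensor_eval p (tcomp p s T) u
     = (\<Sum>xs\<in>idx p. \<Sum>ys\<in>idx p. T ys * (\<Prod>k<p. Pv s (axis (xs!k) 1) $ (ys!k) * u k $ (xs!k)))"
    unfolding tensor_eval_def tcomp_def
    by (intro sum.cong refl) (auto simp: idx_def sum_distrib_right prod.distrib mult.assoc)
  also have "\<dots> = (\<Sum>ys\<in>idx p. T ys * (\<Sum>xs\<in>idx p. \<Prod>k<p. Pv s (axis (xs!k) 1) $ (ys!k) * u k $ (xs!k)))"
    by (subst sum.swap) (simp add: sum_distrib_left)
  also have "\<dots> = (\<Sum>ys\<in>idx p. T ys * (\<Prod>k<p. \<Sum>a\<in>UNIV. Pv s (axis a 1) $ (ys!k) * u k $ a))"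
    by (subst prod_sum_idx[symmetric]) simp
  also have "\<dots> = tensor_eval p T (\<lambda>k. Pv s (u k))"
    unfolding tensor_eval_def by (simp add: Pv_sum')
  finally show ?thesis .
qed

lemma tcomp_adj:
  "(\<Sum>xs\<in>idx p. U xs * tcomp p s D xs) = (\<Sum>xs\<in>idx p. tcomp p s U xs * D xs)"
proof -
  have "(\<Sum>xs\<in>idx p. U xs * tcomp p s D xs) = (\<Sum>xs\<in>idx p. \<Sum>ys\<in>idx p. U xs * (D ys * (\<Prod>k<p. Pv s (axis (xs!k) 1) $ (ys!k))))"
    unfolding tcomp_def tensor_eval_def by (intro sum.cong refl) (auto simp: idx_def sum_distrib_left)
  also have "\<dots> = (\<Sum>ys\<in>idx p. \<Sum>xs\<in>idx p. U xs * (D ys * (\<Prod>k<p. Pv s (axis (xs!k) 1) $ (ys!k))))"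
    by (rule sum.swap)
  also have "\<dots> = (\<Sum>ys\<in>idx p. \<Sum>xs\<in>idx p. (U xs * (\<Prod>k<p. Pv s (axis (ys!k) 1) $ (xs!k))) * D ys)"
  proof (intro sum.cong refl)
    fix xs ys :: "'a list"
    have "(\<Prod>k<p. Pv s (axis (xs!k) 1) $ (ys!k)) = (\<Prod>k<p. Pv s (axis (ys!k) 1) $ (xs!k))"
      by (intro prod.cong refl) (rule Pv_axis_sym)
    thus "U xs * (D ys * (\<Prod>k<p. Pv s (axis (xs!k) 1) $ (ys!k))) = (U xs * (\<Prod>k<p. Pv s (axis (ys!k) 1) $ (xs!k))) * D ys"
      by simp
  qed
  also have "\<dots> = (\<Sum>xs\<in>idx p. tcomp p s U xs * D xs)"
    unfolding tcomp_def tensor_eval_def by (intro sum.cong refl) (auto simp: idx_def sum_distrib_right)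
  finally show ?thesis .
qed

lemma tcomp_sym:
  assumes "sym_tensor p T"
  shows "sym_tensor p (tcomp p s T)"
  unfolding sym_tensor_def is_tensor_def
proof (intro conjI allI impI)
  fix xs :: "'a list" assume "length xs \<noteq> p" thus "tcomp p s T xs = 0" by (simp add: tcomp_def)
next
  fix xs ys :: "'a list" assume l: "length xs = p" and m: "mset xs = mset ys"
  have ly: "length ys = p" using l m by (metis size_mset)
  obtain \<sigma> where \<sigma>: "\<sigma> permutes {..<length ys}" "permute_list \<sigma> ys = xs" using mset_eq_permutation[OF m] by blast
  have "tensor_eval p T (\<lambda>k. Pv s (axis (xs!k) 1)) = tensor_eval p T ((\<lambda>k. Pv s (axis (ys!k) 1)) \<circ> \<sigma>)"
    by (rule tensor_eval_cong) (use \<sigma> ly in \<open>auto simp: permute_list_nth\<close>)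
  also have "\<dots> = tensor_eval p T (\<lambda>k. Pv s (axis (ys!k) 1))" using te_perm assms \<sigma>(1) ly by metis
  finally show "tcomp p s T xs = tcomp p s T ys" using l ly by (simp add: tcomp_def)
qed

lemma tapply_lin:
  "(\<Sum>i\<in>UNIV. c i * tensor_apply p T (v i) xs) = tensor_apply p T (\<Sum>i\<in>UNIV. c i *\<^sub>R v i) xs"
  unfolding tensor_apply_def
  by (auto simp: sum_component sum_distrib_left sum_distrib_right mult.assoc intro: sum.swap)

lemma tcomp_apply:
  assumes "p \<ge> 1"
  shows "tensor_apply p (tcomp p s T) s = (\<lambda>_. 0)"
proof
  fix ys :: "'a list"
  obtain m where m: "p = Suc m" using assms by (cases p) auto
  have v0: "(\<Sum>i\<in>UNIV. s$i *\<^sub>R Pv s (axis i 1)) = 0"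
    by (simp add: vec_eq_iff sum_component Pv_sum) (simp add: Pv_def)
  have "(\<Sum>i\<in>UNIV. s$i * tcomp p s T (i#ys)) = 0" if "length ys = m"
  proof -
    have "(\<Sum>i\<in>UNIV. s$i * tcomp p s T (i#ys))
        = (\<Sum>i\<in>UNIV. s$i * tensor_eval m (tensor_apply p T (Pv s (axis i 1))) (\<lambda>k. Pv s (axis (ys!k) 1)))"
      using that unfolding tcomp_def m tensor_eval_Suc by (simp add: o_def)
    also have "\<dots> = tensor_eval m (\<lambda>zs. \<Sum>i\<in>UNIV. s$i * tensor_apply p T (Pv s (axis i 1)) zs) (\<lambda>k. Pv s (axis (ys!k) 1))"
      unfolding tensor_eval_def sum_distrib_left sum_distrib_right by (subst sum.swap) (simp add: mult.assoc)
    also have "\<dots> = 0" unfolding tapply_lin v0 unfolding tensor_apply_def tensor_eval_def zero_index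
      by (simp only: mult_zero_left sum.neutral_const if_cancel)
    finally show ?thesis .
  qed
  thus "tensor_apply p (tcomp p s T) s ys = 0" by (simp add: tensor_apply_def m)
qed

primrec gg :: "nat \<Rightarrow> real^'n \<Rightarrow> 'n \<Rightarrow> ('n multiset \<Rightarrow> real) \<Rightarrow> 'n multiset \<Rightarrow> real" where
  "gg 0 s i0 Rm N = 0"
| "gg (Suc k) s i0 Rm N = (Rm (N - {#i0#}) - (\<Sum>i\<in>UNIV-{i0}. s$i * gg k s i0 Rm (add_mset i (N - {#i0#})))) / s$i0"

lemma exists_feasible:
  fixes s :: "real^'n::finite" and R :: "'n tensor"
  assumes "p \<ge> 1" "s \<noteq> 0" "sym_tensor (p - 1) R"
  shows "\<exists>U. sym_tensor p U \<and> tensor_apply p U s = R"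
proof -
  obtain i0 where i0: "s $ i0 \<noteq> 0" using assms(2) by (metis vec_eq_iff zero_index)
  define Rm where "Rm M = R (SOME xs. mset xs = M)" for M
  define Um where "Um N = gg (count N i0) s i0 Rm N" for N
  define U where "U xs = (if length xs = p then Um (mset xs) else 0)" for xs
  have symU: "sym_tensor p U" unfolding sym_tensor_def is_tensor_def U_def
    by (auto dest: mset_eq_length)
  have "tensor_apply p U s ys = R ys" for ys
  proof (cases "length ys = p - 1")
    case False
    thus ?thesis using assms(3) by (simp add: tensor_apply_def sym_tensor_def is_tensor_def)
  next
    case True
    define M where "M = mset ys"
    define c where "c = count M i0"
    define S where "S = (\<Sum>i\<in>UNIV-{i0}. s$i * gg c s i0 Rm (add_mset i M))"
    have l: "length (i # ys) = p" for i using True assms(1) by simp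
    have "tensor_apply p U s ys = (\<Sum>i\<in>UNIV. s$i * Um (add_mset i M))"
      using True l by (simp add: tensor_apply_def U_def M_def)
    also have "\<dots> = s$i0 * Um (add_mset i0 M) + (\<Sum>i\<in>UNIV-{i0}. s$i * Um (add_mset i M))"
      by (simp add: sum.remove)
    also have "(\<Sum>i\<in>UNIV-{i0}. s$i * Um (add_mset i M)) = S"
      unfolding S_def Um_def c_def by (intro sum.cong refl) auto
    also have "Um (add_mset i0 M) = (Rm M - S) / s$i0"
      unfolding Um_def S_def c_def by simp
    also have "s$i0 * ((Rm M - S) / s$i0) + S = Rm M" using i0 by simp
    also have "Rm M = R ys"
    proof -
      have ex: "\<exists>xs. mset xs = M" unfolding M_def by blast
      let ?x = "SOME xs. mset xs = M"
      have "mset ?x = mset ys" using someI_ex[OF ex] M_def by simp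
      moreover have "length ?x = p - 1" using calculation True by (metis mset_eq_length)
      ultimately show ?thesis using assms(3) unfolding Rm_def sym_tensor_def by metis
    qed
    finally show ?thesis .
  qed
  thus ?thesis using symU by blast
qed

lemma sym_diff: "sym_tensor p A \<Longrightarrow> sym_tensor p B \<Longrightarrow> sym_tensor p (\<lambda>xs. A xs - B xs)"
  unfolding sym_tensor_def is_tensor_def by simp

lemma tapply_diff: "tensor_apply p (\<lambda>xs. A xs - B xs) s = (\<lambda>ys. tensor_apply p A s ys - tensor_apply p B s ys)"
  unfolding tensor_apply_def by (auto simp: right_diff_distrib sum_subtractf)

lemma teval_diff: "tensor_eval p (\<lambda>xs. A xs - B xs) u = tensor_eval p A u - tensor_eval p B u"
  unfolding tensor_eval_def by (simp add: left_diff_distrib sum_subtractf)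

lemma KZ_entry:
  assumes "sym_tensor p D" "tensor_apply p D s = (\<lambda>_. 0)" "s \<noteq> 0"
    "\<forall>u. (\<forall>k<p. s \<bullet> u k = 0) \<longrightarrow> tensor_eval p U u = 0" "xs \<in> idx p"
  shows "D xs = tcomp p s D xs" "tcomp p s U xs = 0"
proof -
  have l: "length xs = p" using assms(5) by (simp add: idx_def)
  show "D xs = tcomp p s D xs"
    using tensor_entry[OF l, of D] te_proj[OF assms(1,2), of "\<lambda>k. axis (xs ! k) 1"] l
    by (simp add: tcomp_def)
  show "tcomp p s U xs = 0" using assms(4) Pv_orth[OF assms(3)] l by (simp add: tcomp_def)
qed

lemma orth:
  assumes "sym_tensor p D" "tensor_apply p D s = (\<lambda>_. 0)" "s \<noteq> 0"
    "\<forall>u. (\<forall>k<p. s \<bullet> u k = 0) \<longrightarrow> tensor_eval p U u = 0"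
  shows "(\<Sum>xs\<in>idx p. U xs * D xs) = 0"
proof -
  have "(\<Sum>xs\<in>idx p. U xs * D xs) = (\<Sum>xs\<in>idx p. U xs * tcomp p s D xs)"
    using KZ_entry(1)[OF assms] by (intro sum.cong) auto
  also have "\<dots> = (\<Sum>xs\<in>idx p. tcomp p s U xs * D xs)" by (rule tcomp_adj)
  also have "\<dots> = 0" using KZ_entry(2)[OF assms] by simp
  finally show ?thesis .
qed

lemma KZ:
  assumes "sym_tensor p D" "tensor_apply p D s = (\<lambda>_. 0)" "s \<noteq> 0"
    "\<forall>u. (\<forall>k<p. s \<bullet> u k = 0) \<longrightarrow> tensor_eval p D u = 0"
  shows "D = (\<lambda>_. 0)"
proof
  fix xs
  show "D xs = 0"
  proof (cases "xs \<in> idx p")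
    case True thus ?thesis using KZ_entry[OF assms True] by simp
  next
    case False thus ?thesis using assms(1) by (simp add: sym_tensor_def is_tensor_def idx_def)
  qed
qed

theorem mainTheorem2:
  fixes s :: "real^'n" and R :: "'n tensor" and p :: nat
  assumes "p \<ge> 2" and "s \<noteq> 0" and "sym_tensor (p - 1) R"
  shows "\<exists>U. (sym_tensor p U \<and> tensor_apply p U s = R \<and>
              (\<forall>V. sym_tensor p V \<and> tensor_apply p V s = R \<longrightarrow> frob_norm p U \<le> frob_norm p V))
          \<and> (\<forall>W. (sym_tensor p W \<and> tensor_apply p W s = R \<and>
              (\<forall>V. sym_tensor p V \<and> tensor_apply p V s = R \<longrightarrow> frob_norm p W \<le> frob_norm p V))
              \<longrightarrow> W = U)
          \<and> (sym_tensor p U \<and> tensor_apply p U s = R \<and>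
              (\<forall>u. (\<forall>k<p. s \<bullet> u k = 0) \<longrightarrow> tensor_eval p U u = 0))
          \<and> (\<forall>W. (sym_tensor p W \<and> tensor_apply p W s = R \<and>
              (\<forall>u. (\<forall>k<p. s \<bullet> u k = 0) \<longrightarrow> tensor_eval p W u = 0)) \<longrightarrow> W = U)"
proof -
  have p1: "p \<ge> 1" using assms(1) by simp
  obtain U1 where U1: "sym_tensor p U1" "tensor_apply p U1 s = R"
    using exists_feasible[OF p1 assms(2,3)] by blast
  define U where "U xs = U1 xs - tcomp p s U1 xs" for xs
  have symU: "sym_tensor p U" unfolding U_def by (rule sym_diff[OF U1(1) tcomp_sym[OF U1(1)]])
  have appU: "tensor_apply p U s = R"
    unfolding U_def tapply_diff U1(2) by (simp add: tcomp_apply[OF p1])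
  have ZU: "\<forall>u. (\<forall>k<p. s \<bullet> u k = 0) \<longrightarrow> tensor_eval p U u = 0"
  proof (intro allI impI)
    fix u :: "nat \<Rightarrow> real^'n" assume h: "\<forall>k<p. s \<bullet> u k = 0"
    have "tensor_eval p U1 (\<lambda>k. Pv s (u k)) = tensor_eval p U1 u"
      by (rule tensor_eval_cong) (simp add: h Pv_id)
    thus "tensor_eval p U u = 0" unfolding U_def teval_diff te_tcomp by simp
  qed
  have fin: "finite (idx p :: 'n list set)" by (rule finite_idx)
  have pyth: "(\<Sum>xs\<in>idx p. (V xs)\<^sup>2) = (\<Sum>xs\<in>idx p. (U xs)\<^sup>2) + (\<Sum>xs\<in>idx p. (V xs - U xs)\<^sup>2)"
    if V: "sym_tensor p V" "tensor_apply p V s = R" for V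
  proof -
    have "sym_tensor p (\<lambda>xs. V xs - U xs)" by (rule sym_diff[OF V(1) symU])
    moreover have "tensor_apply p (\<lambda>xs. V xs - U xs) s = (\<lambda>_. 0)"
      unfolding tapply_diff V(2) appU by simp
    ultimately have o: "(\<Sum>xs\<in>idx p. U xs * (V xs - U xs)) = 0" using orth assms(2) ZU by blast
    have "(\<Sum>xs\<in>idx p. (V xs)\<^sup>2) = (\<Sum>xs\<in>idx p. (U xs)\<^sup>2 + 2 * (U xs * (V xs - U xs)) + (V xs - U xs)\<^sup>2)"
      by (intro sum.cong refl) (simp add: power2_eq_square algebra_simps)
    also have "\<dots> = (\<Sum>xs\<in>idx p. (U xs)\<^sup>2) + (\<Sum>xs\<in>idx p. (V xs - U xs)\<^sup>2)"
      using o by (simp add: sum.distrib sum_distrib_left[symmetric])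
    finally show ?thesis .
  qed
  have minU: "frob_norm p U \<le> frob_norm p V" if "sym_tensor p V" "tensor_apply p V s = R" for V
    unfolding frob_norm_def using pyth[OF that] by (simp add: sum_nonneg)
  have eqU: "W = U" if W: "sym_tensor p W" "\<forall>xs\<in>idx p. W xs = U xs" for W
  proof
    fix xs show "W xs = U xs"
    proof (cases "xs \<in> idx p")
      case True thus ?thesis using W(2) by blast
    next
      case False
      hence "length xs \<noteq> p" by (simp add: idx_def)
      thus ?thesis using W(1) symU unfolding sym_tensor_def is_tensor_def by simp
    qed
  qed
  have uniq1: "\<forall>W. (sym_tensor p W \<and> tensor_apply p W s = R \<and>
              (\<forall>V. sym_tensor p V \<and> tensor_apply p V s = R \<longrightarrow> frob_norm p W \<le> frob_norm p V))
              \<longrightarrow> W = U"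
  proof (intro allI impI)
    fix W assume h: "sym_tensor p W \<and> tensor_apply p W s = R \<and>
              (\<forall>V. sym_tensor p V \<and> tensor_apply p V s = R \<longrightarrow> frob_norm p W \<le> frob_norm p V)"
    hence "frob_norm p W \<le> frob_norm p U" using symU appU by blast
    hence "(\<Sum>xs\<in>idx p. (W xs)\<^sup>2) \<le> (\<Sum>xs\<in>idx p. (U xs)\<^sup>2)"
      unfolding frob_norm_def by (simp add: sum_nonneg)
    hence "(\<Sum>xs\<in>idx p. (W xs - U xs)\<^sup>2) \<le> 0" using pyth[of W] h by simp
    hence "(\<Sum>xs\<in>idx p. (W xs - U xs)\<^sup>2) = 0" by (simp add: antisym sum_nonneg)
    hence "\<forall>xs\<in>idx p. (W xs - U xs)\<^sup>2 = 0" using fin by (simp add: sum_nonneg_eq_0_iff)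
    thus "W = U" using h eqU by simp
  qed
  have uniq2: "\<forall>W. (sym_tensor p W \<and> tensor_apply p W s = R \<and>
              (\<forall>u. (\<forall>k<p. s \<bullet> u k = 0) \<longrightarrow> tensor_eval p W u = 0)) \<longrightarrow> W = U"
  proof (intro allI impI)
    fix W assume h: "sym_tensor p W \<and> tensor_apply p W s = R \<and>
              (\<forall>u. (\<forall>k<p. s \<bullet> u k = 0) \<longrightarrow> tensor_eval p W u = 0)"
    have "sym_tensor p (\<lambda>xs. W xs - U xs)" using h symU by (intro sym_diff) auto
    moreover have "tensor_apply p (\<lambda>xs. W xs - U xs) s = (\<lambda>_. 0)"
      unfolding tapply_diff using h appU by simp
    moreover have "\<forall>u. (\<forall>k<p. s \<bullet> u k = 0) \<longrightarrow> tensor_eval p (\<lambda>xs. W xs - U xs) u = 0"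
      using h ZU by (simp add: teval_diff)
    ultimately have "(\<lambda>xs. W xs - U xs) = (\<lambda>_. 0)" using KZ assms(2) by blast
    thus "W = U" by (simp add: fun_eq_iff)
  qed
  have minU': "\<forall>V. sym_tensor p V \<and> tensor_apply p V s = R \<longrightarrow> frob_norm p U \<le> frob_norm p V"
    using minU by blast
  show ?thesis
    by (rule exI[of _ U], intro conjI symU appU minU' ZU uniq1 uniq2)
qed

end
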